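(* Let $\rho,\pi,\gamma,\delta>0$, $0<\beta<1$, $\sigma>0$ with $\sigma\neq 1$, and assume $$\rho<\delta<\rho+\delta\sigma,\qquad \frac{\delta+\pi-\pi\beta}{\beta}-\frac{\delta-\rho}{\sigma}>0 .$$ Put $z^*=\left(\frac{\beta\gamma}{\delta+\pi}\right)^{\frac{1}{\beta-1}}$ and $\theta=\frac{\delta+\pi-\pi\beta}{\beta}-\frac{\delta-\rho}{\sigma}$. Let $c_1>0$, $z_0>0$ with $z_0\neq z^*$, and $c_0,k_0,h_0,u_0>0$ with $u_0=z_0k_0/h_0$. Define for $t\ge 0$ $$z(t)=\frac{z^*z_0}{\left[(z^{*1-\beta}-z_0^{1-\beta})e^{-\frac{(1-\beta)(\delta+\pi)}{\beta}t}+z_0^{1-\beta}\right]^{\frac{1}{1-\beta}}},\qquad F(t)=\int_0^t z(s)^{\frac{\sigma-\beta}{\sigma}}e^{-\theta s}\,ds,$$ and $K=\frac{k_0}{c_0 z_0^{\frac{\beta-\sigma}{\sigma}}}$. Assume $$c_0 z_0^{\frac{\beta}{\sigma}}=\left(\frac{c_1\delta}{(1-\beta)\gamma}\right)^{-\frac{1}{\sigma}},\qquad \lim_{t\to\infty}F(t)=K,$$ $$\frac{\gamma(1-\beta)(\rho-\delta+\delta\sigma)}{\delta}=\frac{u_0}{k_0}\Big[\sigma c_0z_0^{\beta-1}-(\rho+\pi-\pi\sigma)k_0z_0^{\beta-1}+\beta\gamma(1-\sigma)k_0\Big].$$ Define $$c(t)=c_0z_0^{\frac{\beta}{\sigma}}e^{-\frac{\rho-\delta}{\sigma}t}z(t)^{-\frac{\beta}{\sigma}},\qquad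 k(t)=\big(K-F(t)\big)c_0z_0^{\frac{\beta}{\sigma}}z(t)^{-1}e^{\frac{\delta+\pi-\pi\beta}{\beta}t},$$ $$h(t)=\frac{h_0\Big[\sigma c_0z_0^{\frac{\beta}{\sigma}}e^{-\frac{\rho-\delta}{\sigma}t}z(t)^{\beta-\frac{\beta}{\sigma}}+\big(\beta\gamma(1-\sigma)-(\rho+\pi-\pi\sigma)z(t)^{\beta-1}\big)\big(K-F(t)\big)c_0z_0^{\frac{\beta}{\sigma}}e^{\frac{\delta+\pi-\pi\beta}{\beta}t}\Big]}{z_0\big[\sigma c_0z_0^{\beta-1}-(\rho+\pi-\pi\sigma)k_0z_0^{\beta-1}+\beta\gamma(1-\sigma)k_0\big]},$$ $$u(t)=\frac{u_0}{k_0}\Big[\sigma c_0z_0^{\beta-1}-(\rho+\pi-\pi\sigma)k_0z_0^{\beta-1}+\beta\gamma(1-\sigma)k_0\Big]\cdot\frac{K-F(t)}{\big[\beta\gamma(1-\sigma)-(\rho+\pi-\pi\sigma)z(t)^{\beta-1}\big]\big(K-F(t)\big)+\sigma z(t)^{\beta-\frac{\beta}{\sigma}}e^{-\theta t}},$$ $$\lambda(t)=\frac{c_1\delta}{(1-\beta)\gamma}e^{(\rho-\delta)t}z(t)^{\beta},\qquad \mu(t)=c_1e^{(\rho-\delta)t}.$$ Then $(c,u,k,h,\lambda,\mu)$ is a solution of the first-order conditions of the Lucas–Uzawa problem, namely for all $t\ge0$: $$\lambda=c^{-\sigma},\quad u^{\beta}=\frac{\gamma(1-\beta)k^{\beta}h^{-\beta}}{\delta}\frac{\lambda}{\mu},\quad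 \dot k=\gamma k^{\beta}u^{1-\beta}h^{1-\beta}-\pi k-c,\quad \dot h=\delta(1-u)h,$$ $$\dot\lambda=-\lambda\gamma\beta u^{1-\beta}k^{\beta-1}h^{1-\beta}+\lambda(\rho+\pi),\quad \dot\mu=\mu(\rho-\delta),$$ with $c(0)=c_0$, $k(0)=k_0$, $h(0)=h_0$, $u(0)=u_0$, $z(0)=z_0$, and $z(t)=h(t)u(t)/k(t)$, and it satisfies the transversality conditions $\lim_{t\to\infty}e^{-\rho t}\lambda(t)k(t)=0$ and $\lim_{t\to\infty}e^{-\rho t}\mu(t)h(t)=0$.
   Context: Lucas–Uzawa model: a representative agent maximizes $\int_0^\infty \frac{c^{1-\sigma}-1}{1-\sigma}e^{-\rho t}\,dt$ over consumption $c$ and the fraction $u$ of labor allocated to production of physical capital, subject to $\dot k=\gamma k^\beta u^{1-\beta}h^{1-\beta}-\pi k-c$ and $\dot h=\delta(1-u)h$, where $k$ is physical capital, $h$ is human capital, $\rho$ the discount rate, $\pi$ the depreciation rate, $\gamma,\delta$ technology levels, $\beta$ the output elasticity of physical capital, $1/\sigma$ the elasticity of intertemporal substitution. The current-value Hamiltonian is $H=\frac{c^{1-\sigma}-1}{1-\sigma}+\lambda[\gamma k^\beta u^{1-\beta}h^{1-\beta}-\pi k-c]+\mu\delta(1-u)h$ with costate variables $\lambda,\mu$; the displayed equations are the Pontryagin first-order conditions. The variable $z$ denotes $hu/k$. *)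

theory Defs
  imports "HOL-Analysis.Analysis"
begin

end

theory Submission
  imports Defs
begin

lemma cont_from_deriv:
  fixes f :: "real \<Rightarrow> real"
  shows "(\<And>x. x \<in> S \<Longrightarrow> (f has_real_derivative f' x) (at x within S)) \<Longrightarrow> continuous_on S f"
  by (meson DERIV_continuous continuous_on_eq_continuous_within)

lemma dec_strict:
  fixes f f' :: "real \<Rightarrow> real"
  assumes d: "\<And>x. x \<ge> lo \<Longrightarrow> (f has_real_derivative f' x) (at x within {lo..})"
    and n: "\<And>x. x > lo \<Longrightarrow> f' x < 0" and s: "lo \<le> s" and st: "s < t"
  shows "f t < f s"
proof (rule DERIV_neg_imp_decreasing_open[OF st])
  fix x assume x: "s < x" "x < t"
  hence "x \<in> interior {lo..}" using s by simp
  hence "at x within {lo..} = at x" by (rule at_within_interior)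
  with d[of x] n[of x] s x show "\<exists>y. DERIV f x :> y \<and> y < 0" by auto
next
  have "continuous_on {lo..} f" by (rule cont_from_deriv[where f'=f']) (use d in simp)
  thus "continuous_on {s..t} f" by (rule continuous_on_subset) (use s in auto)
qed

lemma dec_nonstrict:
  fixes f f' :: "real \<Rightarrow> real"
  assumes d: "\<And>x. x \<ge> lo \<Longrightarrow> (f has_real_derivative f' x) (at x within {lo..})"
    and n: "\<And>x. x > lo \<Longrightarrow> f' x \<le> 0" and s: "lo \<le> s" and st: "s \<le> t"
  shows "f t \<le> f s"
proof (rule DERIV_nonpos_imp_decreasing_open[OF st])
  fix x assume x: "s < x" "x < t"
  hence "x \<in> interior {lo..}" using s by simp
  hence "at x within {lo..} = at x" by (rule at_within_interior)
  with d[of x] n[of x] s x show "\<exists>y. DERIV f x :> y \<and> y \<le> 0" by auto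
next
  have "continuous_on {lo..} f" by (rule cont_from_deriv[where f'=f']) (use d in simp)
  thus "continuous_on {s..t} f" by (rule continuous_on_subset) (use s in auto)
qed

lemma dec_lim_gt:
  fixes f :: "real \<Rightarrow> real"
  assumes dec: "\<And>s t. lo \<le> s \<Longrightarrow> s < t \<Longrightarrow> f t < f s" and lim: "(f \<longlongrightarrow> L) at_top" and s: "lo \<le> s"
  shows "L < f s"
proof -
  have "L \<le> f (s+1)"
  proof (rule tendsto_upperbound[OF lim])
    show "\<forall>\<^sub>F i in at_top. f i \<le> f (s + 1)"
      unfolding eventually_at_top_linorder
      by (rule exI[of _ "s+2"]) (use dec s in \<open>auto intro: less_imp_le\<close>)
  qed simp
  also have "\<dots> < f s" using dec[OF s] by simp
  finally show ?thesis .
qed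

lemma dec_lim_ge:
  fixes f :: "real \<Rightarrow> real"
  assumes dec: "\<And>s t. lo \<le> s \<Longrightarrow> s \<le> t \<Longrightarrow> f t \<le> f s" and lim: "(f \<longlongrightarrow> L) at_top" and s: "lo \<le> s"
  shows "L \<le> f s"
proof (rule tendsto_upperbound[OF lim])
  show "\<forall>\<^sub>F i in at_top. f i \<le> f s"
    unfolding eventually_at_top_linorder
    by (rule exI[of _ "s"]) (use dec s in auto)
qed simp

lemma integral_deriv_within:
  fixes g :: "real \<Rightarrow> real"
  assumes "continuous_on {a..} g" "x \<ge> a"
  shows "((\<lambda>t. integral {a..t} g) has_real_derivative g x) (at x within {a..})"
proof -
  have "((\<lambda>t. integral {a..t} g) has_real_derivative g x) (at x within {a..x+1})"
    by (rule integral_has_real_derivative) (use assms in \<open>auto intro: continuous_on_subset\<close>)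
  moreover have "at x within {a..x+1} = at x within {a..}"
    by (rule at_within_nhd[of _ "{..<x+1}"]) auto
  ultimately show ?thesis by simp
qed

lemma bdd_times_zero:
  fixes f g :: "real \<Rightarrow> real"
  assumes "eventually (\<lambda>t. \<bar>f t\<bar> \<le> M) at_top" "(g \<longlongrightarrow> 0) at_top"
  shows "((\<lambda>t. f t * g t) \<longlongrightarrow> 0) at_top"
proof (rule Lim_null_comparison)
  show "eventually (\<lambda>t. norm (f t * g t) \<le> M * \<bar>g t\<bar>) at_top"
    using assms(1) by eventually_elim (simp add: abs_mult mult_right_mono)
  show "((\<lambda>t. M * \<bar>g t\<bar>) \<longlongrightarrow> 0) at_top"
    by (rule tendsto_mult_right_zero[OF tendsto_rabs_zero[OF assms(2)]])
qed

lemma ev_bdd_mult: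
  fixes f g :: "real \<Rightarrow> real"
  assumes "eventually (\<lambda>t. \<bar>f t\<bar> \<le> M) F" "eventually (\<lambda>t. \<bar>g t\<bar> \<le> M') F"
  shows "eventually (\<lambda>t. \<bar>f t * g t\<bar> \<le> M * M') F"
  using assms
proof eventually_elim
  case (elim t)
  have "0 \<le> M" using elim(1) abs_ge_zero order_trans by blast
  thus ?case unfolding abs_mult using elim by (intro mult_mono) auto
qed

lemma ev_bdd_const: "eventually (\<lambda>t. \<bar>(c::real)\<bar> \<le> \<bar>c\<bar>) F"
  by simp

lemma lim_exp_neg:
  fixes c :: real
  assumes "c < 0"
  shows "((\<lambda>t. exp (c * t)) \<longlongrightarrow> 0) at_top"
proof -
  have "filterlim (\<lambda>t. c * t) at_bot at_top"
    by (rule filterlim_tendsto_neg_mult_at_bot[OF tendsto_const assms filterlim_ident])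
  thus ?thesis by (rule filterlim_compose[OF exp_at_bot])
qed

lemma conv_ev_bdd:
  fixes f :: "real \<Rightarrow> real"
  assumes "(f \<longlongrightarrow> L) at_top"
  shows "\<exists>M. eventually (\<lambda>t. \<bar>f t\<bar> \<le> M) at_top"
proof -
  have "eventually (\<lambda>t. norm (f t) < \<bar>L\<bar> + 1) at_top"
    by (rule order_tendstoD(2)[OF tendsto_norm[OF assms]]) simp
  hence "eventually (\<lambda>t. \<bar>f t\<bar> \<le> \<bar>L\<bar> + 1) at_top" by eventually_elim simp
  thus ?thesis ..
qed

theorem mainTheorem1:
  fixes \<rho> \<pi>d \<gamma> \<delta> \<beta> \<sigma> c\<^sub>1 z\<^sub>0 c\<^sub>0 k\<^sub>0 h\<^sub>0 u\<^sub>0 :: real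
    and z F c k h u lam mu :: "real \<Rightarrow> real"
    and zs \<theta> K :: real
  assumes pos: "\<rho> > 0" "\<pi>d > 0" "\<gamma> > 0" "\<delta> > 0"
    and beta: "0 < \<beta>" "\<beta> < 1"
    and sigma: "\<sigma> > 0" "\<sigma> \<noteq> 1"
    and cond1: "\<rho> < \<delta>" "\<delta> < \<rho> + \<delta> * \<sigma>"
    and cond2: "(\<delta> + \<pi>d - \<pi>d * \<beta>) / \<beta> - (\<delta> - \<rho>) / \<sigma> > 0"
    and zs_def: "zs = (\<beta> * \<gamma> / (\<delta> + \<pi>d)) powr (1 / (\<beta> - 1))"
    and theta_def: "\<theta> = (\<delta> + \<pi>d - \<pi>d * \<beta>) / \<beta> - (\<delta> - \<rho>) / \<sigma>"
    and c1: "c\<^sub>1 > 0"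
    and z0: "z\<^sub>0 > 0" "z\<^sub>0 \<noteq> zs"
    and init_pos: "c\<^sub>0 > 0" "k\<^sub>0 > 0" "h\<^sub>0 > 0" "u\<^sub>0 > 0"
    and u0_def: "u\<^sub>0 = z\<^sub>0 * k\<^sub>0 / h\<^sub>0"
    and z_def: "z = (\<lambda>t. zs * z\<^sub>0 /
        ((zs powr (1 - \<beta>) - z\<^sub>0 powr (1 - \<beta>))
           * exp (- ((1 - \<beta>) * (\<delta> + \<pi>d) / \<beta>) * t) + z\<^sub>0 powr (1 - \<beta>))
          powr (1 / (1 - \<beta>)))"
    and F_def: "F = (\<lambda>t. integral {0..t} (\<lambda>s. z s powr ((\<sigma> - \<beta>) / \<sigma>) * exp (- \<theta> * s)))"
    and K_def: "K = k\<^sub>0 / (c\<^sub>0 * z\<^sub>0 powr ((\<beta> - \<sigma>) / \<sigma>))"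
    and hc0: "c\<^sub>0 * z\<^sub>0 powr (\<beta> / \<sigma>) = (c\<^sub>1 * \<delta> / ((1 - \<beta>) * \<gamma>)) powr (- 1 / \<sigma>)"
    and hF: "(F \<longlongrightarrow> K) at_top"
    and hu0: "\<gamma> * (1 - \<beta>) * (\<rho> - \<delta> + \<delta> * \<sigma>) / \<delta> =
        u\<^sub>0 / k\<^sub>0 * (\<sigma> * c\<^sub>0 * z\<^sub>0 powr (\<beta> - 1) - (\<rho> + \<pi>d - \<pi>d * \<sigma>) * k\<^sub>0 * z\<^sub>0 powr (\<beta> - 1)
                    + \<beta> * \<gamma> * (1 - \<sigma>) * k\<^sub>0)"
    and c_def: "c = (\<lambda>t. c\<^sub>0 * z\<^sub>0 powr (\<beta> / \<sigma>) * exp (- ((\<rho> - \<delta>) / \<sigma>) * t) * z t powr (- \<beta> / \<sigma>))"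
    and k_def: "k = (\<lambda>t. (K - F t) * c\<^sub>0 * z\<^sub>0 powr (\<beta> / \<sigma>) * z t powr (-1)
                    * exp ((\<delta> + \<pi>d - \<pi>d * \<beta>) / \<beta> * t))"
    and h_def: "h = (\<lambda>t. h\<^sub>0 *
        (\<sigma> * c\<^sub>0 * z\<^sub>0 powr (\<beta> / \<sigma>) * exp (- ((\<rho> - \<delta>) / \<sigma>) * t) * z t powr (\<beta> - \<beta> / \<sigma>)
         + (\<beta> * \<gamma> * (1 - \<sigma>) - (\<rho> + \<pi>d - \<pi>d * \<sigma>) * z t powr (\<beta> - 1))
           * (K - F t) * c\<^sub>0 * z\<^sub>0 powr (\<beta> / \<sigma>) * exp ((\<delta> + \<pi>d - \<pi>d * \<beta>) / \<beta> * t))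
        / (z\<^sub>0 * (\<sigma> * c\<^sub>0 * z\<^sub>0 powr (\<beta> - 1) - (\<rho> + \<pi>d - \<pi>d * \<sigma>) * k\<^sub>0 * z\<^sub>0 powr (\<beta> - 1)
                    + \<beta> * \<gamma> * (1 - \<sigma>) * k\<^sub>0)))"
    and u_def: "u = (\<lambda>t. u\<^sub>0 / k\<^sub>0 *
        (\<sigma> * c\<^sub>0 * z\<^sub>0 powr (\<beta> - 1) - (\<rho> + \<pi>d - \<pi>d * \<sigma>) * k\<^sub>0 * z\<^sub>0 powr (\<beta> - 1)
          + \<beta> * \<gamma> * (1 - \<sigma>) * k\<^sub>0)
        * ((K - F t) /
           ((\<beta> * \<gamma> * (1 - \<sigma>) - (\<rho> + \<pi>d - \<pi>d * \<sigma>) * z t powr (\<beta> - 1)) * (K - F t)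
            + \<sigma> * z t powr (\<beta> - \<beta> / \<sigma>) * exp (- \<theta> * t))))"
    and lam_def: "lam = (\<lambda>t. c\<^sub>1 * \<delta> / ((1 - \<beta>) * \<gamma>) * exp ((\<rho> - \<delta>) * t) * z t powr \<beta>)"
    and mu_def: "mu = (\<lambda>t. c\<^sub>1 * exp ((\<rho> - \<delta>) * t))"
  shows "(\<forall>t\<ge>0.
            lam t = c t powr (- \<sigma>)
          \<and> u t powr \<beta> = \<gamma> * (1 - \<beta>) * k t powr \<beta> * h t powr (- \<beta>) / \<delta> * (lam t / mu t)
          \<and> (k has_real_derivative
                (\<gamma> * k t powr \<beta> * u t powr (1 - \<beta>) * h t powr (1 - \<beta>) - \<pi>d * k t - c t))
               (at t within {0..})
          \<and> (h has_real_derivative (\<delta> * (1 - u t) * h t)) (at t within {0..})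
          \<and> (lam has_real_derivative
                (- lam t * \<gamma> * \<beta> * u t powr (1 - \<beta>) * k t powr (\<beta> - 1) * h t powr (1 - \<beta>)
                 + lam t * (\<rho> + \<pi>d))) (at t within {0..})
          \<and> (mu has_real_derivative (mu t * (\<rho> - \<delta>))) (at t within {0..})
          \<and> z t = h t * u t / k t)
       \<and> c 0 = c\<^sub>0 \<and> k 0 = k\<^sub>0 \<and> h 0 = h\<^sub>0 \<and> u 0 = u\<^sub>0 \<and> z 0 = z\<^sub>0
       \<and> ((\<lambda>t. exp (- \<rho> * t) * lam t * k t) \<longlongrightarrow> 0) at_top
       \<and> ((\<lambda>t. exp (- \<rho> * t) * mu t * h t) \<longlongrightarrow> 0) at_top"
proof -
  have b1: "0 < 1 - \<beta>" using beta by simp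
  define q where "q = 1/(1-\<beta>)"
  define a where "a = (1-\<beta>)*(\<delta>+\<pi>d)/\<beta>"
  define Y0 where "Y0 = z\<^sub>0 powr (1-\<beta>)"
  define Y1 where "Y1 = zs powr (1-\<beta>) - z\<^sub>0 powr (1-\<beta>)"
  define y where "y = (\<lambda>t. Y1 * exp(-a*t) + Y0)"
  define w where "w = (\<lambda>t. (\<delta>+\<pi>d)/\<beta> - \<gamma> * z t powr (1-\<beta>))"
  have a_pos: "a > 0" using b1 pos beta unfolding a_def by simp
  have qa: "q*a = (\<delta>+\<pi>d)/\<beta>" using b1 unfolding q_def a_def by simp
  have zs_pos: "zs > 0" unfolding zs_def using pos beta by simp
  have zsY: "zs powr (1-\<beta>) = (\<delta>+\<pi>d)/(\<beta>*\<gamma>)"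
  proof -
    have "zs powr (1-\<beta>) = (\<beta>*\<gamma>/(\<delta>+\<pi>d)) powr (1/(\<beta>-1)*(1-\<beta>))" by (simp add: zs_def powr_powr)
    also have "1/(\<beta>-1)*(1-\<beta>) = -1" using beta by (simp add: field_simps)
    finally show ?thesis using pos beta by (simp add: powr_neg_one)
  qed
  have Y0_pos: "Y0 > 0" unfolding Y0_def using z0 by simp
  have y_pos: "y t > 0" if "t \<ge> 0" for t
  proof -
    have e: "0 < exp(-a*t)" "exp(-a*t) \<le> 1" using a_pos that by auto
    have "y t = zs powr (1-\<beta>) * exp(-a*t) + Y0 * (1 - exp(-a*t))"
      unfolding y_def Y1_def Y0_def by (simp add: algebra_simps)
    also have "\<dots> > 0" using e zs_pos Y0_pos by (intro add_pos_nonneg) auto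
    finally show ?thesis .
  qed
  have z_eq: "z t = zs*z\<^sub>0 * y t powr (-q)" for t
    unfolding z_def y_def Y1_def Y0_def a_def q_def by (simp add: powr_minus_divide)
  have zp_eq: "z t powr p = (zs*z\<^sub>0) powr p * y t powr (-q*p)" for t p
    by (simp add: z_eq powr_mult powr_powr)
  have z_pos: "z t > 0" if "t \<ge> 0" for t using y_pos[OF that] zs_pos z0 by (simp add: z_eq)
  have qb: "-q*(1-\<beta>) = -1" using b1 by (simp add: q_def)
  have z0_eq: "z 0 = z\<^sub>0"
  proof -
    have "y 0 = zs powr (1-\<beta>)" by (simp add: y_def Y1_def Y0_def)
    hence "y 0 powr (-q) = zs powr ((1-\<beta>)*(-q))" by (simp add: powr_powr)
    also have "(1-\<beta>)*(-q) = -1" using b1 by (simp add: q_def)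
    finally have "y 0 powr (-q) = zs powr (-1)" .
    thus ?thesis using zs_pos by (simp add: z_eq powr_neg_one)
  qed
  have y_deriv: "(y has_real_derivative (-a*Y1*exp(-a*t))) (at t within S)" for t S
    unfolding y_def by (auto intro!: derivative_eq_intros)
  have w_eq: "w t = q*a*Y1*exp(-a*t)/y t" if "t\<ge>0" for t
  proof -
    have yp: "y t > 0" using y_pos that .
    have "z t powr (1-\<beta>) = (zs*z\<^sub>0) powr (1-\<beta>) * y t powr (-1)"
      using zp_eq[of t "1-\<beta>"] qb by simp
    also have "\<dots> = zs powr (1-\<beta>) * Y0 / y t" using yp by (simp add: powr_mult Y0_def powr_neg_one)
    finally have zt: "z t powr (1-\<beta>) = (\<delta>+\<pi>d)/(\<beta>*\<gamma>) * Y0 / y t" by (simp add: zsY)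
    have "Y1*exp(-a*t) = y t - Y0" by (simp add: y_def)
    hence "q*a*Y1*exp(-a*t)/y t = (\<delta>+\<pi>d)/\<beta> * (y t - Y0) / y t" by (simp add: qa)
    also have "\<dots> = w t" using yp pos beta unfolding w_def zt by (simp add: field_simps)
    finally show ?thesis by simp
  qed
  have zp_deriv: "((\<lambda>s. z s powr p) has_real_derivative p * z t powr p * w t) (at t within {0..})"
    if "t \<ge> 0" for t p
  proof -
    have yp: "y t > 0" using y_pos that .
    have d: "((\<lambda>s. (zs*z\<^sub>0) powr p * y s powr (-q*p)) has_real_derivative
       (zs*z\<^sub>0) powr p * (((-q*p) * y t powr (-q*p - 1)) * (-a*Y1*exp(-a*t)))) (at t within {0..})"
    proof -
      have "((\<lambda>s. y s powr (-q*p)) has_real_derivative ((-q*p) * y t powr (-q*p - 1)) * (-a*Y1*exp(-a*t))) (at t within {0..})"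
        by (rule DERIV_chain2[where f="\<lambda>z. z powr (-q*p)" and g=y, OF has_real_derivative_powr[OF yp] y_deriv])
      thus ?thesis by (rule DERIV_cmult)
    qed
    have ypow: "y t powr (-q*p - 1) = y t powr (-q*p) / y t" using yp by (simp add: powr_diff)
    have D: "(zs*z\<^sub>0) powr p * (((-q*p) * y t powr (-q*p - 1)) * (-a*Y1*exp(-a*t))) = p * z t powr p * w t"
      unfolding zp_eq w_eq[OF that] ypow using yp by (simp add: field_simps)
    show ?thesis unfolding D[symmetric] unfolding zp_eq by (rule d)
  qed
  have zpd: "((\<lambda>s. z s powr p) has_real_derivative D) (at t within {0..})"
    if "t \<ge> 0" "D = p * z t powr p * w t" for t p D using zp_deriv[OF that(1)] that(2) by simp
  define g where "g = (\<lambda>s. z s powr ((\<sigma> - \<beta>) / \<sigma>) * exp (- \<theta> * s))"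
  have g_pos: "g t > 0" if "t \<ge> 0" for t using z_pos[OF that] by (simp add: g_def)
  have g_cont: "continuous_on {0..} g"
  proof (rule cont_from_deriv)
    fix x :: real assume "x \<in> {0..}"
    hence x: "x \<ge> 0" by simp
    have e: "((\<lambda>s. exp(- \<theta>* s)) has_real_derivative (exp(- \<theta>*x) * (- \<theta>))) (at x within {0..})"
      by (auto intro!: derivative_eq_intros)
    show "(g has_real_derivative ((\<sigma>-\<beta>)/\<sigma> * z x powr ((\<sigma>-\<beta>)/\<sigma>) * w x) * exp(- \<theta>*x) + exp(- \<theta>*x) * (- \<theta>) * z x powr ((\<sigma>-\<beta>)/\<sigma>)) (at x within {0..})"
      unfolding g_def by (rule DERIV_mult[OF zp_deriv[OF x] e])
  qed
  have F_eq: "F = (\<lambda>t. integral {0..t} g)" unfolding F_def g_def ..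
  have F_deriv: "(F has_real_derivative g t) (at t within {0..})" if "t \<ge> 0" for t
    unfolding F_eq by (rule integral_deriv_within[OF g_cont that])
  have Fd: "(F has_real_derivative D) (at t within {0..})" if "t \<ge> 0" "D = g t" for t D
    using F_deriv[OF that(1)] that(2) by simp
  have F_inc: "F s < F t" if "0 \<le> s" "s < t" for s t
    using dec_strict[where f="\<lambda>x. - F x" and f'="\<lambda>x. - g x" and lo=0, OF _ _ that]
      F_deriv g_pos by (auto intro!: derivative_intros)
  have P_pos: "K - F t > 0" if "t \<ge> 0" for t
    using dec_lim_gt[where f="\<lambda>x. - F x" and lo=0 and L="-K", OF _ tendsto_minus[OF hF] that] F_inc
    by auto
  define E where "E = (\<delta> + \<pi>d - \<pi>d * \<beta>) / \<beta>"
  define A where "A = \<rho> + \<pi>d - \<pi>d * \<sigma>"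
  define C where "C = c\<^sub>0 * z\<^sub>0 powr (\<beta> / \<sigma>)"
  define D where "D = \<sigma> * c\<^sub>0 * z\<^sub>0 powr (\<beta> - 1) - A * k\<^sub>0 * z\<^sub>0 powr (\<beta> - 1) + \<beta> * \<gamma> * (1 - \<sigma>) * k\<^sub>0"
  define G where "G = \<gamma> * (1 - \<beta>) * (\<rho> - \<delta> + \<delta> * \<sigma>)"
  define B where "B = (\<lambda>t. \<beta> * \<gamma> * (1 - \<sigma>) - A * z t powr (\<beta> - 1))"
  define N where "N = (\<lambda>t. \<sigma> * C * exp (- ((\<rho> - \<delta>) / \<sigma>) * t) * z t powr (\<beta> - \<beta> / \<sigma>) + B t * (K - F t) * C * exp (E * t))"
  have C_pos: "C > 0" unfolding C_def using init_pos z0 by simp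
  have G_pos: "G > 0" unfolding G_def using pos b1 cond1 by simp
  have uD: "u\<^sub>0 / k\<^sub>0 * D = G / \<delta>" using hu0 unfolding D_def A_def G_def by simp
  have D_pos: "D > 0"
  proof -
    have "u\<^sub>0 / k\<^sub>0 * D > 0" unfolding uD using G_pos pos by simp
    thus ?thesis using init_pos by (auto simp: zero_less_mult_iff zero_less_divide_iff)
  qed
  have eexp: "exp (- ((\<rho> - \<delta>) / \<sigma>) * t) = exp (E * t) * exp (- \<theta> * t)" for t
  proof -
    have "E * t + - \<theta> * t = - ((\<rho> - \<delta>) / \<sigma>) * t" unfolding theta_def E_def using sigma by (simp add: field_simps)
    thus ?thesis by (simp add: exp_add[symmetric])
  qed
  have expd: "((\<lambda>s. exp (c * s)) has_real_derivative exp (c * t) * c) (at t within S)" for c t S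
    by (auto intro!: derivative_eq_intros)
  have N_deriv: "(N has_real_derivative (\<delta> * N t - G * (K - F t) * C * exp (E * t))) (at t within {0..})"
    if t: "t \<ge> 0" for t
  proof -
    note d1 = DERIV_mult[OF DERIV_cmult[OF expd[of "- ((\<rho> - \<delta>) / \<sigma>)" t], of "\<sigma> * C"] zp_deriv[OF t, of "\<beta> - \<beta> / \<sigma>"]]
    note dB = DERIV_diff[OF DERIV_const[of "\<beta> * \<gamma> * (1 - \<sigma>)"] DERIV_cmult[OF zp_deriv[OF t, of "\<beta> - 1"], of A]]
    note dP = DERIV_diff[OF DERIV_const[of K] F_deriv[OF t]]
    note d2 = DERIV_mult[OF DERIV_cmult_right[OF DERIV_mult[OF dB dP], of C] expd[of E t]]
    have zt: "z t > 0" using z_pos t .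
    define Zt where "Zt = z t"
    define Zb where "Zb = z t powr \<beta>"
    define Zs where "Zs = z t powr (- \<beta> / \<sigma>)"
    define eE where "eE = exp (E * t)"
    define et where "et = exp (- \<theta> * t)"
    define P where "P = K - F t"
    have Ztp: "Zt > 0" "Zb > 0" using zt by (auto simp: Zt_def Zb_def)
    have p1: "z t powr (\<beta> - \<beta> / \<sigma>) = Zb * Zs" unfolding Zb_def Zs_def by (simp add: powr_add[symmetric])
    have p2: "z t powr (\<beta> - 1) = Zb / Zt" unfolding Zb_def Zt_def using zt by (simp add: powr_diff)
    have p3: "z t powr ((\<sigma> - \<beta>) / \<sigma>) = Zt * Zs"
    proof -
      have "(\<sigma> - \<beta>) / \<sigma> = 1 + - \<beta> / \<sigma>" using sigma by (simp add: field_simps)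
      thus ?thesis unfolding Zt_def Zs_def using zt by (simp add: powr_diff powr_minus_divide)
    qed
    have p4: "z t powr (1 - \<beta>) = Zt / Zb" unfolding Zb_def Zt_def using zt by (simp add: powr_diff)
    have we: "w t = (\<delta> + \<pi>d) / \<beta> - \<gamma> * (Zt / Zb)" by (simp add: w_def p4)
    have ge: "g t = Zt * Zs * et" by (simp add: g_def p3 et_def)
    have ee: "exp (- ((\<rho> - \<delta>) / \<sigma>) * t) = eE * et" unfolding eE_def et_def by (rule eexp)
    show ?thesis
      unfolding N_def B_def
      apply (rule DERIV_cong[OF DERIV_add[OF d1 d2]])
      unfolding p1 p2 we ge ee P_def[symmetric] eE_def[symmetric]
      unfolding E_def A_def G_def
      using Ztp beta sigma by (simp add: field_simps)
  qed
  have y_lim: "(y \<longlongrightarrow> Y0) at_top"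
  proof -
    have "((\<lambda>t. Y1 * exp (-a * t)) \<longlongrightarrow> 0) at_top"
      by (rule tendsto_mult_right_zero[OF lim_exp_neg]) (use a_pos in simp)
    hence "((\<lambda>t. Y1 * exp (-a * t) + Y0) \<longlongrightarrow> 0 + Y0) at_top" by (rule tendsto_add) simp
    thus ?thesis by (simp add: y_def)
  qed
  have zp_bd: "\<exists>M. eventually (\<lambda>t. \<bar>z t powr p\<bar> \<le> M) at_top" for p
  proof -
    have "((\<lambda>t. (zs*z\<^sub>0) powr p * y t powr (-q*p)) \<longlongrightarrow> (zs*z\<^sub>0) powr p * Y0 powr (-q*p)) at_top"
      by (intro tendsto_mult tendsto_const tendsto_powr y_lim) (use Y0_pos in simp)
    from conv_ev_bdd[OF this] show ?thesis unfolding zp_eq .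
  qed
  have th_pos: "\<theta> > 0" using cond2 theta_def by simp
  obtain M3 where M3: "eventually (\<lambda>t. \<bar>z t powr ((\<sigma> - \<beta>) / \<sigma>)\<bar> \<le> M3) at_top" using zp_bd by blast
  then obtain T0 where T0: "\<And>t. t \<ge> T0 \<Longrightarrow> \<bar>z t powr ((\<sigma> - \<beta>) / \<sigma>)\<bar> \<le> M3"
    by (auto simp: eventually_at_top_linorder)
  define T where "T = max T0 0"
  define Q where "Q = (\<lambda>t. M3 / \<theta> * exp (- \<theta> * t) - (K - F t))"
  have Q_deriv: "(Q has_real_derivative (M3 / \<theta> * (exp (- \<theta> * t) * (- \<theta>)) - (0 - g t))) (at t within {T..})"
    if "t \<ge> T" for t
  proof -
    have t0: "t \<ge> 0" using that by (simp add: T_def)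
    have "(Q has_real_derivative (M3 / \<theta> * (exp (- \<theta> * t) * (- \<theta>)) - (0 - g t))) (at t within {0..})"
      unfolding Q_def by (intro DERIV_diff DERIV_cmult expd DERIV_const F_deriv[OF t0])
    thus ?thesis by (rule DERIV_subset) (auto simp: T_def)
  qed
  have Qn: "M3 / \<theta> * (exp (- \<theta> * x) * (- \<theta>)) - (0 - g x) \<le> 0" if "x > T" for x
  proof -
    have "\<bar>z x powr ((\<sigma> - \<beta>) / \<sigma>)\<bar> \<le> M3" using T0[of x] that by (simp add: T_def)
    hence "z x powr ((\<sigma> - \<beta>) / \<sigma>) \<le> M3" by simp
    hence "g x \<le> M3 * exp (- \<theta> * x)" unfolding g_def by (simp add: mult_right_mono)
    moreover have "M3 / \<theta> * (exp (- \<theta> * x) * (- \<theta>)) = - M3 * exp (- \<theta> * x)"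
      using th_pos by (simp add: field_simps)
    ultimately show ?thesis by linarith
  qed
  have Q_lim: "(Q \<longlongrightarrow> 0) at_top"
  proof -
    have "((\<lambda>t. M3 / \<theta> * exp (- \<theta> * t)) \<longlongrightarrow> 0) at_top"
      by (rule tendsto_mult_right_zero[OF lim_exp_neg]) (use th_pos in simp)
    moreover have "((\<lambda>t. K - F t) \<longlongrightarrow> K - K) at_top" by (intro tendsto_diff tendsto_const hF)
    ultimately have "(Q \<longlongrightarrow> 0 - (K - K)) at_top" unfolding Q_def by (rule tendsto_diff)
    thus ?thesis by simp
  qed
  have Q_nonneg: "Q t \<ge> 0" if "t \<ge> T" for t
  proof (rule dec_lim_ge[where f=Q and lo=T and L=0, OF _ Q_lim that])
    fix s u assume "T \<le> s" "s \<le> u"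
    note dn = dec_nonstrict[where f=Q and lo=T and f'="\<lambda>x. M3 / \<theta> * (exp (- \<theta> * x) * (- \<theta>)) - (0 - g x)"]
    show "Q u \<le> Q s"
      by (rule dn) (use Q_deriv Qn \<open>T \<le> s\<close> \<open>s \<le> u\<close> in auto)
  qed
  define R where "R = (\<lambda>t. (K - F t) * exp (\<theta> * t))"
  have R_bd: "eventually (\<lambda>t. \<bar>R t\<bar> \<le> M3 / \<theta>) at_top"
    unfolding eventually_at_top_linorder
  proof (intro exI allI impI)
    fix t assume t: "t \<ge> T"
    hence t0: "t \<ge> 0" by (simp add: T_def)
    have "K - F t \<le> M3 / \<theta> * exp (- \<theta> * t)" using Q_nonneg[OF t] by (simp add: Q_def)
    hence "(K - F t) * exp (\<theta> * t) \<le> M3 / \<theta> * exp (- \<theta> * t) * exp (\<theta> * t)"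
      by (rule mult_right_mono) simp
    also have "\<dots> = M3 / \<theta>" by (simp add: mult.assoc exp_add[symmetric])
    finally show "\<bar>R t\<bar> \<le> M3 / \<theta>" using P_pos[OF t0] by (simp add: R_def)
  qed
  define X where "X = (\<lambda>t. exp (((\<delta> - \<rho>) / \<sigma> - \<delta>) * t))"
  have X_lim: "(X \<longlongrightarrow> 0) at_top"
  proof -
    have "(\<delta> - \<rho>) / \<sigma> < \<delta>" using cond1 sigma by (simp add: pos_divide_less_eq)
    thus ?thesis unfolding X_def by (intro lim_exp_neg) simp
  qed
  have x1: "exp (- \<delta> * t) * exp (- ((\<rho> - \<delta>) / \<sigma>) * t) = X t" for t
  proof -
    have "- \<delta> * t + - ((\<rho> - \<delta>) / \<sigma>) * t = ((\<delta> - \<rho>) / \<sigma> - \<delta>) * t" using sigma by (simp add: field_simps)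
    thus ?thesis by (simp add: X_def exp_add[symmetric])
  qed
  have x2: "exp (- \<delta> * t) * exp (E * t) = exp (\<theta> * t) * X t" for t
  proof -
    have "- \<delta> * t + E * t = \<theta> * t + ((\<delta> - \<rho>) / \<sigma> - \<delta>) * t"
      unfolding theta_def E_def using sigma beta by (simp add: field_simps)
    thus ?thesis by (simp add: X_def exp_add[symmetric])
  qed
  define W where "W = (\<lambda>t. exp (- \<delta> * t) * N t)"
  have W_eq: "W t = \<sigma> * C * z t powr (\<beta> - \<beta> / \<sigma>) * X t + B t * R t * C * X t" for t
  proof -
    have "W t = \<sigma> * C * z t powr (\<beta> - \<beta> / \<sigma>) * (exp (- \<delta> * t) * exp (- ((\<rho> - \<delta>) / \<sigma>) * t))
       + B t * (K - F t) * C * (exp (- \<delta> * t) * exp (E * t))"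
      unfolding W_def N_def by (simp add: algebra_simps)
    also have "\<dots> = \<sigma> * C * z t powr (\<beta> - \<beta> / \<sigma>) * X t + B t * R t * C * X t"
      unfolding x1 x2 R_def by (simp add: algebra_simps)
    finally show ?thesis .
  qed
  obtain M1 where M1: "eventually (\<lambda>t. \<bar>z t powr (\<beta> - \<beta> / \<sigma>)\<bar> \<le> M1) at_top" using zp_bd by blast
  obtain M2 where M2: "eventually (\<lambda>t. \<bar>z t powr (\<beta> - 1)\<bar> \<le> M2) at_top" using zp_bd by blast
  have B_bd: "eventually (\<lambda>t. \<bar>B t\<bar> \<le> \<bar>\<beta> * \<gamma> * (1 - \<sigma>)\<bar> + \<bar>A\<bar> * M2) at_top"
    using M2
  proof eventually_elim
    case (elim t)
    have "\<bar>A * z t powr (\<beta> - 1)\<bar> \<le> \<bar>A\<bar> * M2" unfolding abs_mult by (rule mult_left_mono[OF elim]) simp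
    thus ?case unfolding B_def using abs_triangle_ineq4[of "\<beta> * \<gamma> * (1 - \<sigma>)" "A * z t powr (\<beta> - 1)"] by linarith
  qed
  have W_lim: "(W \<longlongrightarrow> 0) at_top"
  proof -
    have "((\<lambda>t. \<sigma> * C * z t powr (\<beta> - \<beta> / \<sigma>) * X t) \<longlongrightarrow> 0) at_top"
      by (rule bdd_times_zero[OF ev_bdd_mult[OF ev_bdd_const M1] X_lim])
    moreover have "((\<lambda>t. B t * R t * C * X t) \<longlongrightarrow> 0) at_top"
      by (rule bdd_times_zero[OF ev_bdd_mult[OF ev_bdd_mult[OF B_bd R_bd] ev_bdd_const] X_lim])
    ultimately have "((\<lambda>t. \<sigma> * C * z t powr (\<beta> - \<beta> / \<sigma>) * X t + B t * R t * C * X t) \<longlongrightarrow> 0 + 0) at_top"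
      by (rule tendsto_add)
    moreover have "W = (\<lambda>t. \<sigma> * C * z t powr (\<beta> - \<beta> / \<sigma>) * X t + B t * R t * C * X t)"
      by (rule ext) (rule W_eq)
    ultimately show ?thesis by simp
  qed
  have W_deriv: "(W has_real_derivative - (G * (K - F t) * C * exp (E * t) * exp (- \<delta> * t))) (at t within {0..})"
    if t: "t \<ge> 0" for t
    unfolding W_def by (rule DERIV_cong[OF DERIV_mult[OF expd[of "- \<delta>" t] N_deriv[OF t]]]) (simp add: algebra_simps)
  have W_dec: "W u < W s" if "0 \<le> s" "s < u" for s u
  proof (rule dec_strict[where f=W and lo=0 and f'="\<lambda>t. - (G * (K - F t) * C * exp (E * t) * exp (- \<delta> * t))", OF W_deriv _ that])
    fix x :: real assume "x > 0"
    hence "K - F x > 0" using P_pos by simp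
    thus "- (G * (K - F x) * C * exp (E * x) * exp (- \<delta> * x)) < 0" using G_pos C_pos by simp
  qed
  have N_pos: "N t > 0" if "t \<ge> 0" for t
  proof -
    have "0 < W t" by (rule dec_lim_gt[where f=W and lo=0, OF W_dec W_lim that])
    thus ?thesis by (simp add: W_def zero_less_mult_iff)
  qed
  define \<Lambda> where "\<Lambda> = c\<^sub>1 * \<delta> / ((1 - \<beta>) * \<gamma>)"
  have \<Lambda>_pos: "\<Lambda> > 0" using c1 pos b1 by (simp add: \<Lambda>_def)
  have uh0: "u\<^sub>0 * h\<^sub>0 = z\<^sub>0 * k\<^sub>0" using u0_def init_pos by (simp add: field_simps)
  have hG: "h\<^sub>0 * G / (z\<^sub>0 * D) = \<delta>"
  proof -
    have "G = \<delta> * (u\<^sub>0 / k\<^sub>0 * D)" using uD pos by simp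
    hence "h\<^sub>0 * G / (z\<^sub>0 * D) = \<delta> * (u\<^sub>0 * h\<^sub>0 / (z\<^sub>0 * k\<^sub>0))" using D_pos z0 init_pos by (simp add: field_simps)
    also have "u\<^sub>0 * h\<^sub>0 / (z\<^sub>0 * k\<^sub>0) = 1" using uh0 init_pos z0 by simp
    finally show ?thesis by simp
  qed
  have h_eq: "h t = h\<^sub>0 * N t / (z\<^sub>0 * D)" for t
    unfolding h_def N_def B_def C_def D_def A_def E_def by (simp add: algebra_simps)
  have hfun: "h = (\<lambda>t. h\<^sub>0 * N t / (z\<^sub>0 * D))" by (rule ext) (rule h_eq)
  have k_eq: "k t = (K - F t) * C * exp (E * t) / z t" if t: "t \<ge> 0" for t
    using z_pos[OF t] by (simp add: k_def C_def E_def field_simps)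
  have u_eq: "u t = u\<^sub>0 / k\<^sub>0 * D * (K - F t) * C * exp (E * t) / N t" if t: "t \<ge> 0" for t
  proof -
    have den: "(B t * (K - F t) + \<sigma> * z t powr (\<beta> - \<beta> / \<sigma>) * exp (- \<theta> * t)) * (C * exp (E * t)) = N t"
      unfolding N_def eexp by (simp add: algebra_simps)
    have u1: "u t = u\<^sub>0 / k\<^sub>0 * D * ((K - F t) / (B t * (K - F t) + \<sigma> * z t powr (\<beta> - \<beta> / \<sigma>) * exp (- \<theta> * t)))"
      unfolding u_def D_def B_def A_def by simp
    have ce: "C * exp (E * t) > 0" using C_pos by simp
    have "0 < (B t * (K - F t) + \<sigma> * z t powr (\<beta> - \<beta> / \<sigma>) * exp (- \<theta> * t)) * (C * exp (E * t))"
      unfolding den using N_pos[OF t] .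
    hence dp: "B t * (K - F t) + \<sigma> * z t powr (\<beta> - \<beta> / \<sigma>) * exp (- \<theta> * t) > 0"
      using ce by (simp add: zero_less_mult_iff)
    have gen: "\<And>a P' d c e :: real. d > 0 \<Longrightarrow> c > 0 \<Longrightarrow> e > 0 \<Longrightarrow> a * (P' / d) = a * P' * c * e / (d * (c * e))"
      by (simp add: field_simps)
    show ?thesis unfolding u1 den[symmetric] by (rule gen[OF dp C_pos exp_gt_zero])
  qed
  have uh: "u t * h t = (K - F t) * C * exp (E * t)" if t: "t \<ge> 0" for t
    unfolding u_eq[OF t] h_eq using N_pos[OF t] D_pos z0 init_pos by (simp add: u0_def field_simps)
  have k_pos: "k t > 0" if t: "t \<ge> 0" for t unfolding k_eq[OF t] using P_pos[OF t] C_pos z_pos[OF t] by simp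
  have h_pos: "h t > 0" if t: "t \<ge> 0" for t unfolding h_eq using N_pos[OF t] D_pos z0 init_pos by simp
  have u_pos: "u t > 0" if t: "t \<ge> 0" for t unfolding u_eq[OF t] using N_pos[OF t] D_pos C_pos P_pos[OF t] init_pos by simp
  have zuk: "z t = h t * u t / k t" if t: "t \<ge> 0" for t
  proof -
    have "h t * u t / k t = ((K - F t) * C * exp (E * t)) / ((K - F t) * C * exp (E * t) / z t)"
      using uh[OF t] k_eq[OF t] by (simp add: mult.commute)
    also have "\<dots> = z t" using P_pos[OF t] C_pos z_pos[OF t] by simp
    finally show ?thesis by simp
  qed
  have uhz: "u t * h t = z t * k t" if t: "t \<ge> 0" for t
    using zuk[OF t] k_pos[OF t] by (simp add: field_simps mult.commute)
  have kuh: "k t powr \<beta> * (u t powr (1 - \<beta>) * h t powr (1 - \<beta>)) = k t * z t powr (1 - \<beta>)" if t: "t \<ge> 0" for t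
  proof -
    have e1: "u t powr (1 - \<beta>) * h t powr (1 - \<beta>) = z t powr (1 - \<beta>) * k t powr (1 - \<beta>)"
      by (simp add: powr_mult[symmetric] uhz[OF t])
    have e2: "k t powr \<beta> * k t powr (1 - \<beta>) = k t" using k_pos[OF t] by (simp add: powr_add[symmetric])
    have "k t powr \<beta> * (u t powr (1 - \<beta>) * h t powr (1 - \<beta>)) = z t powr (1 - \<beta>) * (k t powr \<beta> * k t powr (1 - \<beta>))"
      unfolding e1 by (simp add: mult_ac)
    thus ?thesis unfolding e2 by (simp add: mult_ac)
  qed
  have ukh: "u t powr (1 - \<beta>) * k t powr (\<beta> - 1) * h t powr (1 - \<beta>) = z t powr (1 - \<beta>)" if t: "t \<ge> 0" for t
  proof -
    have e1: "u t powr (1 - \<beta>) * h t powr (1 - \<beta>) = z t powr (1 - \<beta>) * k t powr (1 - \<beta>)"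
      by (simp add: powr_mult[symmetric] uhz[OF t])
    have e2: "k t powr (1 - \<beta>) * k t powr (\<beta> - 1) = 1" using k_pos[OF t] by (simp add: powr_add[symmetric])
    have "u t powr (1 - \<beta>) * k t powr (\<beta> - 1) * h t powr (1 - \<beta>) = z t powr (1 - \<beta>) * (k t powr (1 - \<beta>) * k t powr (\<beta> - 1))"
      using e1 by (simp add: mult_ac)
    thus ?thesis unfolding e2 by simp
  qed
  have pw: "z t powr (\<beta> - \<beta> / \<sigma>) = z t powr \<beta> * z t powr (- \<beta> / \<sigma>)"
    "z t powr (\<beta> - 1) = z t powr \<beta> / z t"
    "z t powr ((\<sigma> - \<beta>) / \<sigma>) = z t * z t powr (- \<beta> / \<sigma>)"
    "z t powr (1 - \<beta>) = z t / z t powr \<beta>"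
    "z t powr (-1) = 1 / z t" if t: "t \<ge> 0" for t
  proof -
    have zt: "z t > 0" using z_pos t .
    show "z t powr (\<beta> - \<beta> / \<sigma>) = z t powr \<beta> * z t powr (- \<beta> / \<sigma>)" by (simp add: powr_add[symmetric])
    show "z t powr (\<beta> - 1) = z t powr \<beta> / z t" using zt by (simp add: powr_diff)
    have "(\<sigma> - \<beta>) / \<sigma> = 1 - \<beta> / \<sigma>" using sigma by (simp add: field_simps)
    thus "z t powr ((\<sigma> - \<beta>) / \<sigma>) = z t * z t powr (- \<beta> / \<sigma>)" using zt by (simp add: powr_diff powr_minus_divide)
    show "z t powr (1 - \<beta>) = z t / z t powr \<beta>" using zt by (simp add: powr_diff)
    show "z t powr (-1) = 1 / z t" using zt by (simp add: powr_neg_one)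
  qed
  have cC: "c t = C * exp (- ((\<rho> - \<delta>) / \<sigma>) * t) * z t powr (- \<beta> / \<sigma>)" for t
    by (simp add: c_def C_def)
  have CL: "C powr (- \<sigma>) = \<Lambda>"
  proof -
    have "C = \<Lambda> powr (- 1 / \<sigma>)" using hc0 by (simp add: C_def \<Lambda>_def)
    hence "C powr (- \<sigma>) = \<Lambda> powr ((- 1 / \<sigma>) * (- \<sigma>))" by (simp add: powr_powr)
    also have "(- 1 / \<sigma>) * (- \<sigma>) = 1" using sigma by simp
    finally show ?thesis using \<Lambda>_pos by simp
  qed
  have P1: "lam t = c t powr (- \<sigma>)" for t
  proof -
    have e: "(- ((\<rho> - \<delta>) / \<sigma>) * t) * (- \<sigma>) = (\<rho> - \<delta>) * t" using sigma by (simp add: field_simps)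
    have e2: "(- \<beta> / \<sigma>) * (- \<sigma>) = \<beta>" using sigma by simp
    show ?thesis unfolding cC powr_mult exp_powr_real powr_powr e e2 CL lam_def \<Lambda>_def ..
  qed
  have P2: "u t powr \<beta> = \<gamma> * (1 - \<beta>) * k t powr \<beta> * h t powr (- \<beta>) / \<delta> * (lam t / mu t)"
    if t: "t \<ge> 0" for t
  proof -
    have ut: "u t = z t * k t / h t" using zuk[OF t] h_pos[OF t] k_pos[OF t] by (simp add: field_simps)
    have lm: "lam t / mu t = \<Lambda> / c\<^sub>1 * z t powr \<beta>" unfolding lam_def mu_def \<Lambda>_def using c1 by simp
    have "u t powr \<beta> = z t powr \<beta> * k t powr \<beta> / h t powr \<beta>" unfolding ut by (simp add: powr_mult powr_divide)
    also have "\<dots> = \<gamma> * (1 - \<beta>) * k t powr \<beta> * h t powr (- \<beta>) / \<delta> * (lam t / mu t)"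
      unfolding lm powr_minus_divide \<Lambda>_def using pos b1 c1 h_pos[OF t] by (simp add: field_simps)
    finally show ?thesis .
  qed
  have P3: "(k has_real_derivative (\<gamma> * k t powr \<beta> * u t powr (1 - \<beta>) * h t powr (1 - \<beta>) - \<pi>d * k t - c t))
               (at t within {0..})" if t: "t \<ge> 0" for t
  proof -
    note dP' = DERIV_diff[OF DERIV_const[of K] F_deriv[OF t]]
    note dk = DERIV_mult[OF DERIV_mult[OF DERIV_cmult_right[OF DERIV_cmult_right[OF dP', of c\<^sub>0], of "z\<^sub>0 powr (\<beta> / \<sigma>)"]
       zp_deriv[OF t, of "-1"]] expd[of "(\<delta> + \<pi>d - \<pi>d * \<beta>) / \<beta>" t]]
    have "\<gamma> * k t powr \<beta> * u t powr (1 - \<beta>) * h t powr (1 - \<beta>) = \<gamma> * (k t powr \<beta> * (u t powr (1 - \<beta>) * h t powr (1 - \<beta>)))"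
      by (simp only: mult.assoc)
    also have "\<dots> = \<gamma> * (k t * z t powr (1 - \<beta>))" unfolding kuh[OF t] ..
    finally have tk0: "\<gamma> * k t powr \<beta> * u t powr (1 - \<beta>) * h t powr (1 - \<beta>) = \<gamma> * (k t * z t powr (1 - \<beta>))" .
    have tk: "\<gamma> * k t powr \<beta> * u t powr (1 - \<beta>) * h t powr (1 - \<beta>) - \<pi>d * k t - c t =
      \<gamma> * ((K - F t) * C * exp (E * t) / z t * z t powr (1 - \<beta>)) - \<pi>d * ((K - F t) * C * exp (E * t) / z t)
      - C * (exp (E * t) * exp (- \<theta> * t)) * z t powr (- \<beta> / \<sigma>)"
      unfolding tk0 unfolding k_eq[OF t] cC eexp ..
    have zt: "z t > 0" "z t powr \<beta> > 0" using z_pos[OF t] by auto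
    show ?thesis unfolding tk unfolding k_def
      apply (rule DERIV_cong[OF dk])
      unfolding pw[OF t] w_def g_def pw(3)[OF t] pw(4)[OF t] C_def E_def
      using zt beta sigma by (simp add: field_simps)
  qed
  have P4: "(h has_real_derivative (\<delta> * (1 - u t) * h t)) (at t within {0..})" if t: "t \<ge> 0" for t
  proof -
    note dh = DERIV_cdivide[OF DERIV_cmult[OF N_deriv[OF t], of "h\<^sub>0"], of "z\<^sub>0 * D"]
    have th: "\<delta> * (1 - u t) * h t = h\<^sub>0 * (\<delta> * N t - G * (K - F t) * C * exp (E * t)) / (z\<^sub>0 * D)"
    proof -
      have "\<delta> * (1 - u t) * h t = \<delta> * h t - \<delta> * (u t * h t)" by (simp add: algebra_simps)
      also have "\<dots> = \<delta> * (h\<^sub>0 * N t / (z\<^sub>0 * D)) - (h\<^sub>0 * G / (z\<^sub>0 * D)) * ((K - F t) * C * exp (E * t))"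
        unfolding uh[OF t] unfolding hG h_eq ..
      also have "\<dots> = h\<^sub>0 * (\<delta> * N t - G * (K - F t) * C * exp (E * t)) / (z\<^sub>0 * D)"
        by (simp add: algebra_simps diff_divide_distrib add_divide_distrib)
      finally show ?thesis .
    qed
    show ?thesis unfolding th unfolding hfun by (rule dh)
  qed
  have P5: "(lam has_real_derivative
                (- lam t * \<gamma> * \<beta> * u t powr (1 - \<beta>) * k t powr (\<beta> - 1) * h t powr (1 - \<beta>)
                 + lam t * (\<rho> + \<pi>d))) (at t within {0..})" if t: "t \<ge> 0" for t
  proof -
    note dl = DERIV_mult[OF DERIV_cmult[OF expd[of "\<rho> - \<delta>" t], of "c\<^sub>1 * \<delta> / ((1 - \<beta>) * \<gamma>)"] zp_deriv[OF t, of \<beta>]]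
    have "- lam t * \<gamma> * \<beta> * u t powr (1 - \<beta>) * k t powr (\<beta> - 1) * h t powr (1 - \<beta>) + lam t * (\<rho> + \<pi>d)
       = - lam t * \<gamma> * \<beta> * (u t powr (1 - \<beta>) * k t powr (\<beta> - 1) * h t powr (1 - \<beta>)) + lam t * (\<rho> + \<pi>d)"
      by (simp only: mult.assoc)
    also have "\<dots> = - (c\<^sub>1 * \<delta> / ((1 - \<beta>) * \<gamma>) * exp ((\<rho> - \<delta>) * t) * z t powr \<beta>) * \<gamma> * \<beta> * z t powr (1 - \<beta>)
        + (c\<^sub>1 * \<delta> / ((1 - \<beta>) * \<gamma>) * exp ((\<rho> - \<delta>) * t) * z t powr \<beta>) * (\<rho> + \<pi>d)"
      unfolding ukh[OF t] lam_def ..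
    finally have th: "- lam t * \<gamma> * \<beta> * u t powr (1 - \<beta>) * k t powr (\<beta> - 1) * h t powr (1 - \<beta>) + lam t * (\<rho> + \<pi>d)
       = - (c\<^sub>1 * \<delta> / ((1 - \<beta>) * \<gamma>) * exp ((\<rho> - \<delta>) * t) * z t powr \<beta>) * \<gamma> * \<beta> * z t powr (1 - \<beta>)
        + (c\<^sub>1 * \<delta> / ((1 - \<beta>) * \<gamma>) * exp ((\<rho> - \<delta>) * t) * z t powr \<beta>) * (\<rho> + \<pi>d)" .
    show ?thesis unfolding th unfolding lam_def
      apply (rule DERIV_cong[OF dl])
      unfolding w_def \<Lambda>_def[symmetric] using beta by (simp add: field_simps)
  qed
  have P6: "(mu has_real_derivative (mu t * (\<rho> - \<delta>))) (at t within {0..})" for t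
    unfolding mu_def by (rule DERIV_cong[OF DERIV_cmult[OF expd]]) simp
  have F0: "F 0 = 0" by (simp add: F_def)
  have zz: "z\<^sub>0 powr (\<beta> / \<sigma>) * z\<^sub>0 powr (- \<beta> / \<sigma>) = 1" using z0 by (simp add: powr_add[symmetric])
  have zK: "z\<^sub>0 powr ((\<beta> - \<sigma>) / \<sigma>) = z\<^sub>0 powr (\<beta> / \<sigma>) / z\<^sub>0"
  proof -
    have "(\<beta> - \<sigma>) / \<sigma> = \<beta> / \<sigma> - 1" using sigma by (simp add: field_simps)
    thus ?thesis using z0 by (simp add: powr_diff)
  qed
  have KC: "K * C = k\<^sub>0 * z\<^sub>0" unfolding K_def C_def zK using z0 init_pos by (simp add: field_simps)
  have c_0: "c 0 = c\<^sub>0" unfolding c_def z0_eq using zz by (simp add: mult.assoc)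
  have k_0: "k 0 = k\<^sub>0"
  proof -
    have "k 0 = K * C / z\<^sub>0" using k_eq[of 0] z0_eq F0 by simp
    thus ?thesis using KC z0 by simp
  qed
  have N_0: "N 0 = z\<^sub>0 * D"
  proof -
    have a: "z\<^sub>0 powr (\<beta> - \<beta> / \<sigma>) = z\<^sub>0 powr \<beta> / z\<^sub>0 powr (\<beta> / \<sigma>)" by (simp add: powr_diff)
    have b: "z\<^sub>0 powr (\<beta> - 1) = z\<^sub>0 powr \<beta> / z\<^sub>0" using z0 by (simp add: powr_diff)
    have "N 0 = \<sigma> * C * z\<^sub>0 powr (\<beta> - \<beta> / \<sigma>) + B 0 * (K * C)" by (simp add: N_def F0 z0_eq algebra_simps)
    also have "\<dots> = z\<^sub>0 * D" unfolding KC unfolding B_def z0_eq D_def C_def a b using z0 by (simp add: field_simps)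
    finally show ?thesis .
  qed
  have h_0: "h 0 = h\<^sub>0" unfolding h_eq N_0 using z0 D_pos by simp
  have u_0: "u 0 = u\<^sub>0"
  proof -
    have "u 0 = u\<^sub>0 / k\<^sub>0 * D * (K * C) / N 0" using u_eq[of 0] F0 by (simp add: mult.assoc)
    thus ?thesis unfolding KC N_0 using z0 D_pos init_pos by simp
  qed
  have x3: "exp (- \<rho> * t) * exp ((\<rho> - \<delta>) * t) = exp (- \<delta> * t)" for t
  proof -
    have "- \<rho> * t + (\<rho> - \<delta>) * t = - \<delta> * t" by (simp add: algebra_simps)
    thus ?thesis by (simp add: exp_add[symmetric])
  qed
  have T1eq: "exp (- \<rho> * t) * lam t * k t = \<Lambda> * C * (z t powr \<beta> * z t powr (-1)) * R t * X t" for t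
  proof -
    have "exp (- \<rho> * t) * lam t * k t = \<Lambda> * C * (z t powr \<beta> * z t powr (-1)) * (K - F t) * ((exp (- \<rho> * t) * exp ((\<rho> - \<delta>) * t)) * exp (E * t))"
      unfolding lam_def k_def \<Lambda>_def C_def E_def by (simp only: mult_ac)
    also have "\<dots> = \<Lambda> * C * (z t powr \<beta> * z t powr (-1)) * R t * X t"
      unfolding x3 x2 R_def by (simp only: mult_ac)
    finally show ?thesis .
  qed
  obtain Mb where Mb: "eventually (\<lambda>t. \<bar>z t powr \<beta>\<bar> \<le> Mb) at_top" using zp_bd by blast
  obtain Mm where Mm: "eventually (\<lambda>t. \<bar>z t powr (-1)\<bar> \<le> Mm) at_top" using zp_bd by blast
  have T1: "((\<lambda>t. exp (- \<rho> * t) * lam t * k t) \<longlongrightarrow> 0) at_top"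
  proof -
    have "((\<lambda>t. \<Lambda> * C * (z t powr \<beta> * z t powr (-1)) * R t * X t) \<longlongrightarrow> 0) at_top"
      by (rule bdd_times_zero[OF ev_bdd_mult[OF ev_bdd_mult[OF ev_bdd_const ev_bdd_mult[OF Mb Mm]] R_bd] X_lim])
    moreover have "(\<lambda>t. exp (- \<rho> * t) * lam t * k t) = (\<lambda>t. \<Lambda> * C * (z t powr \<beta> * z t powr (-1)) * R t * X t)"
      by (rule ext) (rule T1eq)
    ultimately show ?thesis by simp
  qed
  have T2: "((\<lambda>t. exp (- \<rho> * t) * mu t * h t) \<longlongrightarrow> 0) at_top"
  proof -
    have "(\<lambda>t. exp (- \<rho> * t) * mu t * h t) = (\<lambda>t. c\<^sub>1 * h\<^sub>0 / (z\<^sub>0 * D) * W t)"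
    proof
      fix t
      have "exp (- \<rho> * t) * mu t * h t = c\<^sub>1 * h\<^sub>0 / (z\<^sub>0 * D) * ((exp (- \<rho> * t) * exp ((\<rho> - \<delta>) * t)) * N t)"
        unfolding mu_def h_eq by (simp add: algebra_simps)
      thus "exp (- \<rho> * t) * mu t * h t = c\<^sub>1 * h\<^sub>0 / (z\<^sub>0 * D) * W t" unfolding x3 W_def .
    qed
    moreover have "((\<lambda>t. c\<^sub>1 * h\<^sub>0 / (z\<^sub>0 * D) * W t) \<longlongrightarrow> 0) at_top"
      by (rule tendsto_mult_right_zero[OF W_lim])
    ultimately show ?thesis by simp
  qed
  show ?thesis
    using P1 P2 P3 P4 P5 P6 zuk c_0 k_0 h_0 u_0 z0_eq T1 T2 by blast
qed

end
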